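(* Let $p$ be a prime and let $f(x,y)=\lambda xy+g(x)+h(y)$ with $\lambda\in\mathbb{Z}_p\setminus\{0\}$ and $g,h:\mathbb{Z}_p\to\mathbb{Z}_p$. Let $P$ be any box with inputs and outputs in $\mathbb{Z}_p$, and for $j\in\mathbb{Z}_p$ define $$\nu_j=\frac1{p^2}\sum_{x,y=0}^{p-1}\sum_{k=0}^{p-1}P(a=k,\,b=k-f(x,y)+j\mid x,y).$$ Then $$P\to\sum_{j=0}^{p-1}\nu_jP^f_j\quad\text{and}\quad P\to\sum_{j=0}^{p-1}\nu_j\,PR_{p,\lambda^{-1}j}.$$
   Context: Let $p$ be a prime. All arithmetic on elements of $\mathbb{Z}_p$ is modulo $p$, and $\lambda^{-1}$ is the inverse of $\lambda$ in $\mathbb{Z}_p$. A box is a conditional probability distribution $P(a,b\mid x,y)$ with $a,b,x,y\in\mathbb{Z}_p$. It is shared by Alice, who supplies $x$ and receives $a$, and Bob, who supplies $y$ and receives $b$. Different copies act independently. A convex combination of boxes is the corresponding convex combination of conditional distributions. For $j\in\mathbb{Z}_p$: - $PR_{p,j}(a,b\mid x,y)=1/p$ if $a-b=xy-j$, and $0$ otherwise. - $P^f_j(a,b\mid x,y)=1/p$ if $a-b=f(x,y)-j$, and $0$ otherwise. $P_1\to P_2$ means the following. For some $N\ge1$, Alice and Bob, using shared randomness, $N$ copies of $P_1$, and local processing but no communication, can exactly produce outputs distributed as $P_2(a,b\mid x,y)$ for every input pair $(x,y)$. *)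

theory Defs
  imports "HOL-Number_Theory.Number_Theory"
begin

text \<open>Elements of Z_p are represented by naturals 0..p-1. A box is a function
  P a b x y giving P(a,b|x,y).\<close>

type_synonym box = "nat \<Rightarrow> nat \<Rightarrow> nat \<Rightarrow> nat \<Rightarrow> real"

definition is_box :: "nat \<Rightarrow> box \<Rightarrow> bool" where
  "is_box p P \<longleftrightarrow>
     (\<forall>a<p. \<forall>b<p. \<forall>x<p. \<forall>y<p. 0 \<le> P a b x y) \<and>
     (\<forall>x<p. \<forall>y<p. (\<Sum>a<p. \<Sum>b<p. P a b x y) = 1)"

definition PR :: "nat \<Rightarrow> nat \<Rightarrow> box" where
  "PR p j a b x y =
     (if [int a - int b = int x * int y - int j] (mod int p) then 1 / real p else 0)"

definition Pf :: "nat \<Rightarrow> (nat \<Rightarrow> nat \<Rightarrow> nat) \<Rightarrow> nat \<Rightarrow> box" where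
  "Pf p f j a b x y =
     (if [int a - int b = int (f x y) - int j] (mod int p) then 1 / real p else 0)"

definition inv_modp :: "nat \<Rightarrow> nat \<Rightarrow> nat" where
  "inv_modp p l = (THE m. m < p \<and> [l * m = 1] (mod p))"

definition zp :: "nat \<Rightarrow> int \<Rightarrow> nat" where
  "zp p z = nat (z mod int p)"

text \<open>P1 \<rightarrow> P2: for some N \<ge> 1, with shared randomness (a finitely supported
  distribution w on a set R of shared random values; local randomness is absorbed
  into it), Alice feeds input alpha i r x into copy i and Bob feeds beta i r y, and
  they compute their final outputs locally from their input, the shared randomness
  and their own outputs oa, ob of the N copies (no communication).\<close>
definition simulates :: "nat \<Rightarrow> box \<Rightarrow> box \<Rightarrow> bool" where
  "simulates p P1 P2 \<longleftrightarrow>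
    (\<exists>N::nat. N \<ge> 1 \<and>
     (\<exists>(R::nat set) (w::nat \<Rightarrow> real)
        (alpha::nat \<Rightarrow> nat \<Rightarrow> nat \<Rightarrow> nat) (beta::nat \<Rightarrow> nat \<Rightarrow> nat \<Rightarrow> nat)
        (A::nat \<Rightarrow> nat \<Rightarrow> (nat \<Rightarrow> nat) \<Rightarrow> nat) (B::nat \<Rightarrow> nat \<Rightarrow> (nat \<Rightarrow> nat) \<Rightarrow> nat).
        finite R \<and> (\<forall>r\<in>R. 0 \<le> w r) \<and> sum w R = 1 \<and>
        (\<forall>i<N. \<forall>r\<in>R. \<forall>x<p. alpha i r x < p) \<and>
        (\<forall>i<N. \<forall>r\<in>R. \<forall>y<p. beta i r y < p) \<and>
        (\<forall>r\<in>R. \<forall>x<p. \<forall>oa\<in>Pi\<^sub>E {..<N} (\<lambda>_. {..<p}). A r x oa < p) \<and>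
        (\<forall>r\<in>R. \<forall>y<p. \<forall>ob\<in>Pi\<^sub>E {..<N} (\<lambda>_. {..<p}). B r y ob < p) \<and>
        (\<forall>a<p. \<forall>b<p. \<forall>x<p. \<forall>y<p.
           P2 a b x y =
             (\<Sum>r\<in>R. w r *
               (\<Sum>oa\<in>Pi\<^sub>E {..<N} (\<lambda>_. {..<p}). \<Sum>ob\<in>Pi\<^sub>E {..<N} (\<lambda>_. {..<p}).
                  (\<Prod>i<N. P1 (oa i) (ob i) (alpha i r x) (beta i r y)) *
                  (if A r x oa = a \<and> B r y ob = b then 1 else 0))))))"

end

theory Submission
  imports Defs
begin

lemma inv_modp_prop:
  assumes "prime p" "0 < l" "l < p"
  shows "inv_modp p l < p \<and> [l * inv_modp p l = 1] (mod p)"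
proof -
  have cop: "coprime l p"
    using assms by (metis prime_nat_iff'' coprime_commute prime_imp_coprime_nat dvd_imp_le not_le)
  obtain x where x: "[l * x = Suc 0] (mod p)" using cong_solve_coprime_nat[OF cop] by blast
  have p0: "p > 0" using assms by auto
  have ex: "x mod p < p \<and> [l * (x mod p) = 1] (mod p)"
    using x p0 by (metis One_nat_def cong_def mod_mult_right_eq mod_less_divisor)
  have uniq: "m = x mod p" if "m < p \<and> [l * m = 1] (mod p)" for m
  proof -
    have "[l * m = l * (x mod p)] (mod p)" using that ex by (meson cong_sym cong_trans)
    then have "[m = x mod p] (mod p)" using cong_mult_lcancel_nat[OF cop] by blast
    then show ?thesis using that ex by (simp add: cong_def)
  qed
  have "inv_modp p l = x mod p" unfolding inv_modp_def
    using ex uniq by (rule the_equality)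
  then show ?thesis using ex by simp
qed

lemma zp_lt: "0 < p \<Longrightarrow> zp p z < p"
  unfolding zp_def by (simp add: nat_less_iff)
lemma int_zp: "0 < p \<Longrightarrow> int (zp p z) = z mod int p"
  unfolding zp_def by simp
lemma zp_eq_iff: "0 < p \<Longrightarrow> a < p \<Longrightarrow> (zp p z = a) \<longleftrightarrow> z mod int p = int a"
  unfolding zp_def by auto
lemma zp_eq_zp: "0 < p \<Longrightarrow> (zp p z1 = zp p z2) \<longleftrightarrow> z1 mod int p = z2 mod int p"
  unfolding zp_def by (simp add: nat_eq_iff)
lemma zp_mod: "zp p (z mod int p) = zp p z" unfolding zp_def by simp

lemma sum_shift:
  assumes "0 < p"
  shows "(\<Sum>u<p. G (zp p (int u + t))) = (\<Sum>k<p. G k)"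
  apply (rule sum.reindex_bij_witness[where i="\<lambda>k. zp p (int k - t)" and j="\<lambda>u. zp p (int u + t)"])
  using assms by (auto simp: zp_lt int_zp zp_eq_iff mod_diff_left_eq mod_add_left_eq)

lemma sum_shift2:
  assumes "0 < p"
  shows "(\<Sum>u<p. G (zp p (t + int u))) = (\<Sum>k<p. G k)"
  using sum_shift[OF assms, of G t] by (simp add: add.commute)

lemma sum_neg:
  assumes "0 < p"
  shows "(\<Sum>c<p. G (zp p (t - int c))) = (\<Sum>k<p. G k)"
  apply (rule sum.reindex_bij_witness[where i="\<lambda>k. zp p (t - int k)" and j="\<lambda>u. zp p (t - int u)"])
  using assms by (auto simp: zp_lt int_zp zp_eq_iff mod_diff_right_eq)

lemma sum_pair:
  fixes p q :: nat
  assumes "0 < p"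
  shows "(\<Sum>r<p*q. G (r mod p) (r div p)) = (\<Sum>j<p. \<Sum>i<q. G j i)"
proof -
  have "(\<Sum>r<p*q. G (r mod p) (r div p)) = (\<Sum>(j,i)\<in>{..<p}\<times>{..<q}. G j i)"
    apply (rule sum.reindex_bij_witness[where i="\<lambda>(j,i). j + p*i" and j="\<lambda>r. (r mod p, r div p)"])
  proof (goal_cases)
    case (1 a) then show ?case by (simp add: mult.commute)
  next
    case (2 a) then show ?case using assms by (auto simp: less_mult_imp_div_less mult.commute)
  next
    case (3 b) then show ?case using assms by (auto split: prod.splits)
  next
    case (4 b)
    then obtain j i where b: "b = (j,i)" "j < p" "i < q" by auto
    have "j + p*i < p + p*i" using b by simp
    also have "\<dots> = p * (Suc i)" by simp
    also have "\<dots> \<le> p * q" using b by (intro mult_le_mono2) simp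
    finally show ?case using b by simp
  next
    case (5 a) then show ?case by simp
  qed
  also have "\<dots> = (\<Sum>j<p. \<Sum>i<q. G j i)" by (simp add: sum.cartesian_product)
  finally show ?thesis .
qed

lemma lt1: "{..<(1::nat)} = {0}" by auto

lemma sum_PiE1:
  "(\<Sum>oa\<in>Pi\<^sub>E {..<1::nat} (\<lambda>_. {..<p}). G (oa 0)) = (\<Sum>a<p. G a)"
  apply (rule sum.reindex_bij_witness[where i="\<lambda>a. (\<lambda>i\<in>{..<1}. a)" and j="\<lambda>oa. oa 0"])
  apply (auto simp: PiE_iff extensional_def fun_eq_iff lt1)
  done

lemma sum_delta2:
  fixes p s t :: nat
  assumes "s < p" "t < p"
  shows "(\<Sum>a0<p. \<Sum>b0<p. F a0 b0 * (if a0 = s \<and> b0 = t then 1 else 0)) = (F s t :: real)"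
proof -
  have e: "\<And>x. (if A \<and> B then x else (0::real)) = (if A then (if B then x else 0) else 0)" for A B by simp
  have "(\<Sum>b0<p. F a0 b0 * (if a0 = s \<and> b0 = t then 1 else 0)) = (if a0 = s then F s t else 0)" for a0
    using assms by (cases "a0 = s") (auto simp: if_distrib[of "\<lambda>x. _ * x"] sum.delta[of "{..<p}" t "\<lambda>_. F s t"] cong: if_cong)
  then show ?thesis using assms by simp
qed

lemma sim1:
  fixes p :: nat and al be :: "nat \<Rightarrow> nat \<Rightarrow> nat" and A' B' :: "nat \<Rightarrow> nat \<Rightarrow> nat \<Rightarrow> nat"
  assumes p0: "0 < p"
  and al: "\<forall>r<p*(p*p). \<forall>x<p. al r x < p" and be: "\<forall>r<p*(p*p). \<forall>y<p. be r y < p"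
  and Ar: "\<forall>r<p*(p*p). \<forall>x<p. \<forall>a0<p. A' r x a0 < p"
  and Br: "\<forall>r<p*(p*p). \<forall>y<p. \<forall>b0<p. B' r y b0 < p"
  and eq: "\<forall>a<p. \<forall>b<p. \<forall>x<p. \<forall>y<p. P2 a b x y = (\<Sum>r<p*(p*p). (1/real p^3) *
      (\<Sum>a0<p. \<Sum>b0<p. P a0 b0 (al r x) (be r y) * (if A' r x a0 = a \<and> B' r y b0 = b then 1 else 0)))"
  shows "simulates p P P2"
  unfolding simulates_def
proof (intro exI conjI)
  let ?S = "Pi\<^sub>E {..<1::nat} (\<lambda>_. {..<p})"
  show "finite {..<p*(p*p)}" by simp
  show "\<forall>r\<in>{..<p*(p*p)}. 0 \<le> (\<lambda>_. 1/real p^3) r" by simp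
  show "sum (\<lambda>_. 1/real p^3) {..<p*(p*p)} = 1" using p0 by (simp add: power3_eq_cube)
  show "\<forall>i<1. \<forall>r\<in>{..<p*(p*p)}. \<forall>x<p. (\<lambda>i r x. al r x) i r x < p" using al by simp
  show "\<forall>i<1. \<forall>r\<in>{..<p*(p*p)}. \<forall>y<p. (\<lambda>i r y. be r y) i r y < p" using be by simp
  show "\<forall>r\<in>{..<p*(p*p)}. \<forall>x<p. \<forall>oa\<in>?S. (\<lambda>r x oa. A' r x (oa 0)) r x oa < p"
    using Ar by (auto simp: PiE_iff lt1)
  show "\<forall>r\<in>{..<p*(p*p)}. \<forall>y<p. \<forall>ob\<in>?S. (\<lambda>r y ob. B' r y (ob 0)) r y ob < p"
    using Br by (auto simp: PiE_iff lt1)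
  show "1 \<le> (1::nat)" by simp
  show "\<forall>a<p. \<forall>b<p. \<forall>x<p. \<forall>y<p. P2 a b x y =
      (\<Sum>r\<in>{..<p*(p*p)}. (\<lambda>_. 1/real p^3) r *
        (\<Sum>oa\<in>?S. \<Sum>ob\<in>?S. (\<Prod>i<1. P (oa i) (ob i) ((\<lambda>i r x. al r x) i r x) ((\<lambda>i r y. be r y) i r y)) *
           (if (\<lambda>r x oa. A' r x (oa 0)) r x oa = a \<and> (\<lambda>r y ob. B' r y (ob 0)) r y ob = b then 1 else 0)))"
  proof (intro allI impI)
    fix a b x y assume ab: "a < p" "b < p" "x < p" "y < p"
    have inner: "(\<Sum>oa\<in>?S. \<Sum>ob\<in>?S. (\<Prod>i<1. P (oa i) (ob i) (al r x) (be r y)) *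
           (if A' r x (oa 0) = a \<and> B' r y (ob 0) = b then 1 else 0)) =
       (\<Sum>a0<p. \<Sum>b0<p. P a0 b0 (al r x) (be r y) * (if A' r x a0 = a \<and> B' r y b0 = b then 1 else 0))" for r
    proof -
      have "(\<Sum>oa\<in>?S. \<Sum>ob\<in>?S. (\<Prod>i<1. P (oa i) (ob i) (al r x) (be r y)) *
           (if A' r x (oa 0) = a \<and> B' r y (ob 0) = b then 1 else 0)) =
         (\<Sum>oa\<in>?S. \<Sum>ob\<in>?S. (\<lambda>a0 b0. P a0 b0 (al r x) (be r y) * (if A' r x a0 = a \<and> B' r y b0 = b then 1 else 0)) (oa 0) (ob 0))"
        by simp
      also have "\<dots> = (\<Sum>oa\<in>?S. \<Sum>b0<p. (\<lambda>a0 b0. P a0 b0 (al r x) (be r y) * (if A' r x a0 = a \<and> B' r y b0 = b then 1 else 0)) (oa 0) b0)"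
        by (rule sum.cong[OF refl], rule sum_PiE1)
      also have "\<dots> = (\<Sum>a0<p. \<Sum>b0<p. (\<lambda>a0 b0. P a0 b0 (al r x) (be r y) * (if A' r x a0 = a \<and> B' r y b0 = b then 1 else 0)) a0 b0)"
        by (rule sum_PiE1)
      finally show ?thesis by simp
    qed
    show "P2 a b x y = (\<Sum>r\<in>{..<p*(p*p)}. (\<lambda>_. 1/real p^3) r *
        (\<Sum>oa\<in>?S. \<Sum>ob\<in>?S. (\<Prod>i<1. P (oa i) (ob i) ((\<lambda>i r x. al r x) i r x) ((\<lambda>i r y. be r y) i r y)) *
           (if (\<lambda>r x oa. A' r x (oa 0)) r x oa = a \<and> (\<lambda>r y ob. B' r y (ob 0)) r y ob = b then 1 else 0)))"
      using eq ab inner by simp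
  qed
qed

lemma dvd_zp: "0 < p \<Longrightarrow> int p dvd (int (zp p z) - z)"
  by (simp add: int_zp mod_eq_dvd_iff[symmetric])

lemma cong_step:
  fixes p l x y u v :: nat and g h :: "nat \<Rightarrow> nat" and f :: "nat \<Rightarrow> nat \<Rightarrow> nat" and \<alpha> \<beta> :: int
  assumes p0: "0 < p"
  and f_def: "f = (\<lambda>x y. zp p (int l * int x * int y + int (g x) + int (h y)))"
  and X: "X = zp p (int x + int u)" and Y: "Y = zp p (int y + int v)"
  and j0: "j0 = zp p (int (f x y) - (\<alpha> - \<beta>))"
  and D: "D = \<alpha> + (int l * int X * int v + int (g X) - int (g x)) - \<beta> + (int l * int u * int y + int (h Y) - int (h y))"
  shows "zp p (k - D) = zp p (k - int (f X Y) + int j0)"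
proof -
  define e1 where "e1 = int X - (int x + int u)"
  define e2 where "e2 = int Y - (int y + int v)"
  define e3 where "e3 = int (f X Y) - (int l * int X * int Y + int (g X) + int (h Y))"
  define e4 where "e4 = int j0 - (int (f x y) - (\<alpha> - \<beta>))"
  define e5 where "e5 = int (f x y) - (int l * int x * int y + int (g x) + int (h y))"
  have d1: "int p dvd e1" unfolding e1_def X using dvd_zp[OF p0] .
  have d2: "int p dvd e2" unfolding e2_def Y using dvd_zp[OF p0] .
  have d3: "int p dvd e3" unfolding e3_def f_def using dvd_zp[OF p0] by simp
  have d4: "int p dvd e4" unfolding e4_def j0 using dvd_zp[OF p0] .
  have d5: "int p dvd e5" unfolding e5_def f_def using dvd_zp[OF p0] by simp
  have eq: "(k - D) - (k - int (f X Y) + int j0) = int l * int y * e1 + int l * int X * e2 + e3 - e4 - e5"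
    unfolding D e1_def e2_def e3_def e4_def e5_def by (simp add: algebra_simps)
  have "int p dvd (k - D) - (k - int (f X Y) + int j0)"
    unfolding eq using d1 d2 d3 d4 d5 by (intro dvd_diff dvd_add dvd_mult) auto
  then show ?thesis using p0 by (simp add: zp_eq_zp mod_eq_dvd_iff)
qed

lemma core:
  fixes p l x y :: nat and g h :: "nat \<Rightarrow> nat" and f :: "nat \<Rightarrow> nat \<Rightarrow> nat" and \<alpha> \<beta> :: int
    and P :: box
  assumes p0: "0 < p" and xy: "x < p" "y < p"
  and f_def: "f = (\<lambda>x y. zp p (int l * int x * int y + int (g x) + int (h y)))"
  and DA: "DA = (\<lambda>u v. int l * int (zp p (int x + int u)) * int v + int (g (zp p (int x + int u))) - int (g x))"
  and DB: "DB = (\<lambda>u v. int l * int u * int y + int (h (zp p (int y + int v))) - int (h y))"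
  shows "(\<Sum>u<p. \<Sum>v<p. \<Sum>c<p. \<Sum>a0<p. \<Sum>b0<p.
            P a0 b0 (zp p (int x + int u)) (zp p (int y + int v)) *
            (if a0 = zp p (\<alpha> + DA u v - int c) \<and> b0 = zp p (\<beta> - DB u v - int c) then 1 else 0))
       = (\<Sum>x'<p. \<Sum>y'<p. \<Sum>k<p. P k (zp p (int k - int (f x' y') + int (zp p (int (f x y) - (\<alpha> - \<beta>))))) x' y')"
proof -
  define j0 where "j0 = zp p (int (f x y) - (\<alpha> - \<beta>))"
  define D where "D = (\<lambda>u v. \<alpha> + DA u v - \<beta> + DB u v)"
  have s1: "(\<Sum>a0<p. \<Sum>b0<p.
            P a0 b0 (zp p (int x + int u)) (zp p (int y + int v)) *
            (if a0 = zp p (\<alpha> + DA u v - int c) \<and> b0 = zp p (\<beta> - DB u v - int c) then 1 else 0))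
      = P (zp p (\<alpha> + DA u v - int c)) (zp p (int (zp p (\<alpha> + DA u v - int c)) - D u v))
          (zp p (int x + int u)) (zp p (int y + int v))" for u v c
  proof -
    have e: "(\<alpha> + DA u v - int c) - D u v = \<beta> - DB u v - int c" unfolding D_def by simp
    have "zp p (int (zp p (\<alpha> + DA u v - int c)) - D u v) = zp p ((\<alpha> + DA u v - int c) - D u v)"
      using p0 by (simp add: int_zp zp_eq_zp mod_diff_left_eq)
    then have "zp p (\<beta> - DB u v - int c) = zp p (int (zp p (\<alpha> + DA u v - int c)) - D u v)"
      using e by simp
    then show ?thesis
      by (subst sum_delta2[where F="\<lambda>a0 b0. P a0 b0 (zp p (int x + int u)) (zp p (int y + int v))"]) (auto simp: zp_lt p0)
  qed
  have s3: "(\<Sum>c<p. P (zp p (\<alpha> + DA u v - int c)) (zp p (int (zp p (\<alpha> + DA u v - int c)) - D u v))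
          (zp p (int x + int u)) (zp p (int y + int v)))
      = (\<Sum>k<p. P k (zp p (int k - int (f (zp p (int x + int u)) (zp p (int y + int v))) + int j0))
          (zp p (int x + int u)) (zp p (int y + int v)))" for u v
  proof -
    have "(\<Sum>c<p. P (zp p (\<alpha> + DA u v - int c)) (zp p (int (zp p (\<alpha> + DA u v - int c)) - D u v))
          (zp p (int x + int u)) (zp p (int y + int v)))
      = (\<Sum>k<p. P k (zp p (int k - D u v)) (zp p (int x + int u)) (zp p (int y + int v)))"
      using sum_neg[OF p0, where G="\<lambda>k. P k (zp p (int k - D u v)) (zp p (int x + int u)) (zp p (int y + int v))"]
      by simp
    also have "\<dots> = (\<Sum>k<p. P k (zp p (int k - int (f (zp p (int x + int u)) (zp p (int y + int v))) + int j0))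
          (zp p (int x + int u)) (zp p (int y + int v)))"
      apply (rule sum.cong[OF refl])
      apply (subst cong_step[OF p0 f_def refl refl j0_def, where D="D u v"])
      unfolding D_def DA DB by simp_all
    finally show ?thesis .
  qed
  have "(\<Sum>u<p. \<Sum>v<p. \<Sum>c<p. \<Sum>a0<p. \<Sum>b0<p.
            P a0 b0 (zp p (int x + int u)) (zp p (int y + int v)) *
            (if a0 = zp p (\<alpha> + DA u v - int c) \<and> b0 = zp p (\<beta> - DB u v - int c) then 1 else 0))
      = (\<Sum>u<p. \<Sum>v<p. \<Sum>k<p. P k (zp p (int k - int (f (zp p (int x + int u)) (zp p (int y + int v))) + int j0))
          (zp p (int x + int u)) (zp p (int y + int v)))"
    by (simp add: s1 s3)
  also have "\<dots> = (\<Sum>u<p. \<Sum>y'<p. \<Sum>k<p. P k (zp p (int k - int (f (zp p (int x + int u)) y') + int j0))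
          (zp p (int x + int u)) y')"
  proof (rule sum.cong[OF refl])
    fix u
    show "(\<Sum>v<p. \<Sum>k<p. P k (zp p (int k - int (f (zp p (int x + int u)) (zp p (int y + int v))) + int j0))
          (zp p (int x + int u)) (zp p (int y + int v))) = (\<Sum>y'<p. \<Sum>k<p. P k (zp p (int k - int (f (zp p (int x + int u)) y') + int j0))
          (zp p (int x + int u)) y')"
      by (rule sum_shift2[OF p0, where G="\<lambda>y'. \<Sum>k<p. P k (zp p (int k - int (f (zp p (int x + int u)) y') + int j0)) (zp p (int x + int u)) y'"])
  qed
  also have "\<dots> = (\<Sum>x'<p. \<Sum>y'<p. \<Sum>k<p. P k (zp p (int k - int (f x' y') + int j0)) x' y')"
    by (rule sum_shift2[OF p0, where G="\<lambda>x'. \<Sum>y'<p. \<Sum>k<p. P k (zp p (int k - int (f x' y') + int j0)) x' y'"])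
  finally show ?thesis unfolding j0_def .
qed

lemma decode3:
  fixes p :: nat
  assumes p0: "0 < p"
  shows "(\<Sum>r<p*(p*p). F (r mod p) (r div p mod p) (r div p div p)) = (\<Sum>u<p. \<Sum>v<p. \<Sum>c<p. F u v c)"
proof -
  have "(\<Sum>r<p*(p*p). F (r mod p) (r div p mod p) (r div p div p)) = (\<Sum>u<p. \<Sum>s<p*p. F u (s mod p) (s div p))"
    using sum_pair[OF p0, where q="p*p" and G="\<lambda>j i. F j (i mod p) (i div p)"] by simp
  also have "\<dots> = (\<Sum>u<p. \<Sum>v<p. \<Sum>c<p. F u v c)"
    by (rule sum.cong[OF refl], rule sum_pair[OF p0, where q=p])
  finally show ?thesis .
qed

lemma main_sum:
  fixes p l x y :: nat and g h :: "nat \<Rightarrow> nat" and f :: "nat \<Rightarrow> nat \<Rightarrow> nat" and \<alpha> \<beta> :: int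
    and P :: box and A' B' :: "nat \<Rightarrow> nat \<Rightarrow> nat"
  assumes p0: "0 < p" and xy: "x < p" "y < p"
  and f_def: "f = (\<lambda>x y. zp p (int l * int x * int y + int (g x) + int (h y)))"
  and DA: "DA = (\<lambda>u v. int l * int (zp p (int x + int u)) * int v + int (g (zp p (int x + int u))) - int (g x))"
  and DB: "DB = (\<lambda>u v. int l * int u * int y + int (h (zp p (int y + int v))) - int (h y))"
  and hA: "\<forall>r<p*(p*p). \<forall>a0<p. (A' r a0 = a) \<longleftrightarrow> a0 = zp p (\<alpha> + DA (r mod p) (r div p mod p) - int (r div p div p))"
  and hB: "\<forall>r<p*(p*p). \<forall>b0<p. (B' r b0 = b) \<longleftrightarrow> b0 = zp p (\<beta> - DB (r mod p) (r div p mod p) - int (r div p div p))"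
  shows "(\<Sum>r<p*(p*p). (1/real p^3) * (\<Sum>a0<p. \<Sum>b0<p. P a0 b0 (zp p (int x + int (r mod p))) (zp p (int y + int (r div p mod p)))
            * (if A' r a0 = a \<and> B' r b0 = b then 1 else 0)))
     = (1 / real p) * ((1 / real p ^ 2) *
          (\<Sum>x'<p. \<Sum>y'<p. \<Sum>k<p. P k (zp p (int k - int (f x' y') + int (zp p (int (f x y) - (\<alpha> - \<beta>))))) x' y'))"
proof -
  have "(\<Sum>r<p*(p*p). (1/real p^3) * (\<Sum>a0<p. \<Sum>b0<p. P a0 b0 (zp p (int x + int (r mod p))) (zp p (int y + int (r div p mod p)))
            * (if A' r a0 = a \<and> B' r b0 = b then 1 else 0)))
     = (\<Sum>r<p*(p*p). (1/real p^3) * (\<lambda>u v c. \<Sum>a0<p. \<Sum>b0<p. P a0 b0 (zp p (int x + int u)) (zp p (int y + int v))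
            * (if a0 = zp p (\<alpha> + DA u v - int c) \<and> b0 = zp p (\<beta> - DB u v - int c) then 1 else 0)) (r mod p) (r div p mod p) (r div p div p))"
    using hA hB by (intro sum.cong refl) auto
  also have "\<dots> = (1/real p^3) * (\<Sum>r<p*(p*p). (\<lambda>u v c. \<Sum>a0<p. \<Sum>b0<p. P a0 b0 (zp p (int x + int u)) (zp p (int y + int v))
            * (if a0 = zp p (\<alpha> + DA u v - int c) \<and> b0 = zp p (\<beta> - DB u v - int c) then 1 else 0)) (r mod p) (r div p mod p) (r div p div p))"
    by (simp add: sum_distrib_left)
  also have "\<dots> = (1/real p^3) * (\<Sum>u<p. \<Sum>v<p. \<Sum>c<p. \<Sum>a0<p. \<Sum>b0<p.
            P a0 b0 (zp p (int x + int u)) (zp p (int y + int v)) *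
            (if a0 = zp p (\<alpha> + DA u v - int c) \<and> b0 = zp p (\<beta> - DB u v - int c) then 1 else 0))"
    by (subst decode3[OF p0]) simp
  also have "\<dots> = (1/real p^3) * (\<Sum>x'<p. \<Sum>y'<p. \<Sum>k<p. P k (zp p (int k - int (f x' y') + int (zp p (int (f x y) - (\<alpha> - \<beta>))))) x' y')"
    by (subst core[OF p0 xy f_def DA DB]) simp
  also have "\<dots> = (1 / real p) * ((1 / real p ^ 2) *
          (\<Sum>x'<p. \<Sum>y'<p. \<Sum>k<p. P k (zp p (int k - int (f x' y') + int (zp p (int (f x y) - (\<alpha> - \<beta>))))) x' y'))"
    by (simp add: power3_eq_cube power2_eq_square)
  finally show ?thesis .
qed

lemma zp_eq_dvd: "0 < p \<Longrightarrow> a < p \<Longrightarrow> (zp p z = a) \<longleftrightarrow> int p dvd (z - int a)"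
proof -
  assume p: "0 < p" "a < p"
  then have "int a mod int p = int a" by simp
  then show ?thesis using p by (metis zp_eq_iff mod_eq_dvd_iff)
qed

lemma dvd_flip: "(m::int) dvd (z1 - z2) \<longleftrightarrow> m dvd (z2 - z1)"
  by (metis dvd_minus_iff minus_diff_eq)

lemma lemA:
  assumes "0 < p" "a < p" "a0 < p"
  shows "(zp p (int a0 - t) = a) \<longleftrightarrow> (a0 = zp p (int a + t))"
proof -
  have "(zp p (int a0 - t) = a) \<longleftrightarrow> int p dvd (int a0 - t - int a)" using assms zp_eq_dvd by blast
  also have "\<dots> \<longleftrightarrow> int p dvd (int a + t - int a0)" by (subst dvd_flip) (simp add: algebra_simps)
  also have "\<dots> \<longleftrightarrow> zp p (int a + t) = a0" using assms zp_eq_dvd by blast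
  finally show ?thesis by auto
qed

lemma lemInv:
  fixes p l li w a :: int
  assumes "p dvd (l * li - 1)"
  shows "p dvd (li * w - a) \<longleftrightarrow> p dvd (w - l * a)"
proof
  assume h: "p dvd (li * w - a)"
  have e: "l * (li * w - a) = (l * li - 1) * w + (w - l * a)" by (simp add: algebra_simps)
  have "p dvd l * (li * w - a)" using h by simp
  then have "p dvd (l * li - 1) * w + (w - l * a)" unfolding e .
  then show "p dvd (w - l * a)" using assms by (simp add: dvd_add_right_iff)
next
  assume h: "p dvd (w - l * a)"
  have e: "li * (w - l * a) = (li * w - a) - (l * li - 1) * a" by (simp add: algebra_simps)
  have "p dvd li * (w - l * a)" using h by simp
  then have "p dvd (li * w - a) - (l * li - 1) * a" unfolding e .
  then show "p dvd (li * w - a)" using assms by (metis dvd_diff_left_iff dvd_mult2)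
qed

lemma lemA2:
  assumes "0 < p" "a < p" "a0 < p" and hli: "int p dvd (int l * li - 1)"
  shows "(zp p (li * (int a0 - s)) = a) \<longleftrightarrow> (a0 = zp p (int l * int a + s))"
proof -
  have "(zp p (li * (int a0 - s)) = a) \<longleftrightarrow> int p dvd (li * (int a0 - s) - int a)" using assms zp_eq_dvd by blast
  also have "\<dots> \<longleftrightarrow> int p dvd ((int a0 - s) - int l * int a)" using lemInv[OF hli] by blast
  also have "\<dots> \<longleftrightarrow> int p dvd (int l * int a + s - int a0)" by (subst dvd_flip) (simp add: algebra_simps)
  also have "\<dots> \<longleftrightarrow> zp p (int l * int a + s) = a0" using assms zp_eq_dvd by blast
  finally show ?thesis by auto
qed

lemma Pf_iff:
  assumes "0 < p" "j < p"
  shows "Pf p f j a b x y = (if j = zp p (int (f x y) - (int a - int b)) then 1 / real p else 0)"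
proof -
  have "[int a - int b = int (f x y) - int j] (mod int p) \<longleftrightarrow> int p dvd (int a - int b - (int (f x y) - int j))"
    by (simp add: cong_iff_dvd_diff)
  also have "\<dots> \<longleftrightarrow> int p dvd (int (f x y) - (int a - int b) - int j)" by (subst dvd_flip) (simp add: algebra_simps)
  also have "\<dots> \<longleftrightarrow> j = zp p (int (f x y) - (int a - int b))" using assms zp_eq_dvd by metis
  finally show ?thesis unfolding Pf_def by simp
qed

lemma PR_iff:
  assumes p0: "0 < p" "j < p" and hli: "int p dvd (int l * int li - 1)"
  and f_def: "f = (\<lambda>x y. zp p (int l * int x * int y + int (g x) + int (h y)))"
  shows "PR p (zp p (int li * int j)) a b x y =
     (if j = zp p (int (f x y) - ((int l * int a + int (g x)) - (int l * int b - int (h y)))) then 1 / real p else 0)"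
proof -
  have "[int a - int b = int x * int y - int (zp p (int li * int j))] (mod int p) \<longleftrightarrow>
      int p dvd (int a - int b - (int x * int y - int (zp p (int li * int j))))"
    by (simp add: cong_iff_dvd_diff)
  also have "\<dots> \<longleftrightarrow> int p dvd (int li * int j - (int x * int y - (int a - int b)))"
  proof -
    have e: "(int a - int b - (int x * int y - int (zp p (int li * int j)))) - (int li * int j - (int x * int y - (int a - int b)))
        = int (zp p (int li * int j)) - int li * int j" by (simp add: algebra_simps)
    have "int p dvd int (zp p (int li * int j)) - int li * int j" using dvd_zp[OF p0(1)] .
    then show ?thesis using e by (metis dvd_diff dvd_add add_diff_cancel_left' diff_add_cancel)
  qed
  also have "\<dots> \<longleftrightarrow> int p dvd (int j - int l * (int x * int y - (int a - int b)))"
    using lemInv[OF hli] by blast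
  also have "\<dots> \<longleftrightarrow> int p dvd (int (f x y) - ((int l * int a + int (g x)) - (int l * int b - int (h y))) - int j)"
  proof -
    have e: "(int (f x y) - ((int l * int a + int (g x)) - (int l * int b - int (h y))) - int j)
       = - (int j - int l * (int x * int y - (int a - int b))) + (int (f x y) - (int l * int x * int y + int (g x) + int (h y)))"
      by (simp add: algebra_simps)
    have "int p dvd (int (f x y) - (int l * int x * int y + int (g x) + int (h y)))"
      unfolding f_def using dvd_zp[OF p0(1)] by simp
    then show ?thesis unfolding e using dvd_flip by (simp add: dvd_add_left_iff)
  qed
  also have "\<dots> \<longleftrightarrow> j = zp p (int (f x y) - ((int l * int a + int (g x)) - (int l * int b - int (h y))))"
    using p0 zp_eq_dvd by metis
  finally show ?thesis unfolding PR_def by simp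
qed

theorem mainTheorem9:
  fixes p l :: nat and g h :: "nat \<Rightarrow> nat" and P :: box
  assumes "prime p"
    and "0 < l" and "l < p"
    and "\<forall>x<p. g x < p" and "\<forall>y<p. h y < p"
    and "is_box p P"
  defines "f \<equiv> (\<lambda>x y. zp p (int l * int x * int y + int (g x) + int (h y)))"
  defines "\<nu> \<equiv> (\<lambda>j. (1 / real p ^ 2) *
              (\<Sum>x<p. \<Sum>y<p. \<Sum>k<p. P k (zp p (int k - int (f x y) + int j)) x y))"
  shows "simulates p P (\<lambda>a b x y. \<Sum>j<p. \<nu> j * Pf p f j a b x y)
       \<and> simulates p P (\<lambda>a b x y. \<Sum>j<p. \<nu> j * PR p (zp p (int (inv_modp p l) * int j)) a b x y)"
proof -
  have p0: "0 < p" using assms(1) prime_gt_0_nat by blast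
  have fd: "f = (\<lambda>x y. zp p (int l * int x * int y + int (g x) + int (h y)))" using f_def by simp
  define li where "li = inv_modp p l"
  have li: "li < p \<and> [l * li = 1] (mod p)" unfolding li_def using inv_modp_prop assms(1-3) by blast
  have hli: "int p dvd (int l * int li - 1)"
  proof -
    have "[int (l * li) = int 1] (mod int p)" using li cong_int_iff by blast
    then show ?thesis by (simp add: cong_iff_dvd_diff)
  qed
  define DAx where "DAx = (\<lambda>x u v. int l * int (zp p (int x + int u)) * int v + int (g (zp p (int x + int u))) - int (g x))"
  define DBy where "DBy = (\<lambda>y u v. int l * int u * int y + int (h (zp p (int y + int v))) - int (h y))"
  have sumj: "(\<Sum>j<p. \<nu> j * (if j = j0 then 1 / real p else 0)) = (1 / real p) * \<nu> j0" if "j0 < p" for j0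
    using that by (simp add: if_distrib[of "\<lambda>z. _ * z"] sum.delta cong: if_cong)
  define A1 where "A1 = (\<lambda>r x a0. zp p (int a0 - (DAx x (r mod p) (r div p mod p) - int (r div p div p))))"
  define B1 where "B1 = (\<lambda>r y b0. zp p (int b0 - (- DBy y (r mod p) (r div p mod p) - int (r div p div p))))"
  have eq1: "\<forall>a<p. \<forall>b<p. \<forall>x<p. \<forall>y<p. (\<Sum>j<p. \<nu> j * Pf p f j a b x y) =
     (\<Sum>r<p*(p*p). (1/real p^3) * (\<Sum>a0<p. \<Sum>b0<p. P a0 b0 (zp p (int x + int (r mod p))) (zp p (int y + int (r div p mod p)))
        * (if A1 r x a0 = a \<and> B1 r y b0 = b then 1 else 0)))"
  proof (intro allI impI)
    fix a b x y assume ab: "a < p" "b < p" "x < p" "y < p"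
    have "(\<Sum>j<p. \<nu> j * Pf p f j a b x y) = (\<Sum>j<p. \<nu> j * (if j = zp p (int (f x y) - (int a - int b)) then 1 / real p else 0))"
      by (intro sum.cong refl) (simp add: Pf_iff[OF p0])
    also have "\<dots> = (1 / real p) * \<nu> (zp p (int (f x y) - (int a - int b)))" by (rule sumj) (simp add: zp_lt p0)
    also have "\<dots> = (\<Sum>r<p*(p*p). (1/real p^3) * (\<Sum>a0<p. \<Sum>b0<p. P a0 b0 (zp p (int x + int (r mod p))) (zp p (int y + int (r div p mod p)))
        * (if A1 r x a0 = a \<and> B1 r y b0 = b then 1 else 0)))"
      apply (subst \<nu>_def)
      apply (rule main_sum[OF p0 ab(3,4) fd, where DA="DAx x" and DB="DBy y" and A'="\<lambda>r a0. A1 r x a0" and B'="\<lambda>r b0. B1 r y b0", symmetric])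
      apply (simp add: DAx_def)
      apply (simp add: DBy_def)
      using ab p0 apply (intro allI impI, unfold A1_def, subst lemA, simp_all add: algebra_simps)
      using ab p0 apply (intro allI impI, unfold B1_def, subst lemA, simp_all add: algebra_simps)
      done
    finally show "(\<Sum>j<p. \<nu> j * Pf p f j a b x y) =
     (\<Sum>r<p*(p*p). (1/real p^3) * (\<Sum>a0<p. \<Sum>b0<p. P a0 b0 (zp p (int x + int (r mod p))) (zp p (int y + int (r div p mod p)))
        * (if A1 r x a0 = a \<and> B1 r y b0 = b then 1 else 0)))" .
  qed
  have part1: "simulates p P (\<lambda>a b x y. \<Sum>j<p. \<nu> j * Pf p f j a b x y)"
    by (rule sim1[OF p0 _ _ _ _ eq1]) (simp_all add: zp_lt p0 A1_def B1_def)
  define A2 where "A2 = (\<lambda>r x a0. zp p (int li * (int a0 - (int (g x) + DAx x (r mod p) (r div p mod p) - int (r div p div p)))))"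
  define B2 where "B2 = (\<lambda>r y b0. zp p (int li * (int b0 - (- int (h y) - DBy y (r mod p) (r div p mod p) - int (r div p div p)))))"
  have eq2: "\<forall>a<p. \<forall>b<p. \<forall>x<p. \<forall>y<p. (\<Sum>j<p. \<nu> j * PR p (zp p (int (inv_modp p l) * int j)) a b x y) =
     (\<Sum>r<p*(p*p). (1/real p^3) * (\<Sum>a0<p. \<Sum>b0<p. P a0 b0 (zp p (int x + int (r mod p))) (zp p (int y + int (r div p mod p)))
        * (if A2 r x a0 = a \<and> B2 r y b0 = b then 1 else 0)))"
  proof (intro allI impI)
    fix a b x y assume ab: "a < p" "b < p" "x < p" "y < p"
    have "(\<Sum>j<p. \<nu> j * PR p (zp p (int (inv_modp p l) * int j)) a b x y) = (\<Sum>j<p. \<nu> j * (if j = zp p (int (f x y) - ((int l * int a + int (g x)) - (int l * int b - int (h y)))) then 1 / real p else 0))"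
      unfolding li_def[symmetric] by (intro sum.cong refl) (simp add: PR_iff[OF p0 _ hli fd])
    also have "\<dots> = (1 / real p) * \<nu> (zp p (int (f x y) - ((int l * int a + int (g x)) - (int l * int b - int (h y)))))" by (rule sumj) (simp add: zp_lt p0)
    also have "\<dots> = (\<Sum>r<p*(p*p). (1/real p^3) * (\<Sum>a0<p. \<Sum>b0<p. P a0 b0 (zp p (int x + int (r mod p))) (zp p (int y + int (r div p mod p)))
        * (if A2 r x a0 = a \<and> B2 r y b0 = b then 1 else 0)))"
      apply (subst \<nu>_def)
      apply (rule main_sum[OF p0 ab(3,4) fd, where DA="DAx x" and DB="DBy y" and A'="\<lambda>r a0. A2 r x a0" and B'="\<lambda>r b0. B2 r y b0", symmetric])
      apply (simp add: DAx_def)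
      apply (simp add: DBy_def)
      using ab p0 apply (intro allI impI, unfold A2_def, subst lemA2[OF _ _ _ hli], simp_all add: algebra_simps)
      using ab p0 apply (intro allI impI, unfold B2_def, subst lemA2[OF _ _ _ hli], simp_all add: algebra_simps)
      done
    finally show "(\<Sum>j<p. \<nu> j * PR p (zp p (int (inv_modp p l) * int j)) a b x y) =
     (\<Sum>r<p*(p*p). (1/real p^3) * (\<Sum>a0<p. \<Sum>b0<p. P a0 b0 (zp p (int x + int (r mod p))) (zp p (int y + int (r div p mod p)))
        * (if A2 r x a0 = a \<and> B2 r y b0 = b then 1 else 0)))" .
  qed
  have part2: "simulates p P (\<lambda>a b x y. \<Sum>j<p. \<nu> j * PR p (zp p (int (inv_modp p l) * int j)) a b x y)"
    by (rule sim1[OF p0 _ _ _ _ eq2]) (simp_all add: zp_lt p0 A2_def B2_def)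
  show ?thesis using part1 part2 by blast
qed

end
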